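(* Let $\mathcal{M}=(E,\mathcal{I})$ be a matroid with $|E|=n$ whose ground set is dependent, and suppose we are given real numbers $\widehat{q}_T$ for all $T\subseteq E$ with $|\widehat{q}_T-q_{T,\mathcal{M}}|\le 1/n^2$. Run the following procedure: set $S\leftarrow E$; while there exists a nonempty $T\subseteq S$ with $\widehat{q}_S-\widehat{q}_{S\setminus T}\le \frac{|T|}{2^{20}|S|\log n}$, pick any such $T$ and set $S\leftarrow S\setminus T$; finally output $S$. Then, for all sufficiently large $n$, the output $S$ is nonempty and globally optimal in $\mathcal{M}$, i.e. $q_{S,\mathcal{M}}\ge 1-2^{-20}$ and $p_{T,\mathcal{M}|_S}\ge \frac{|T|}{2^{21}|S|\log n}$ for every $T\subseteq S$.
   Context: $\log$ denotes the base-2 logarithm. For a matroid $\mathcal{N}$ whose ground set $F$ is dependent and a permutation $\pi$ of $F$, $C_\pi$ denotes the first circuit formed when adding elements in the order of $\pi$ (the unique circuit contained in the shortest dependent prefix of $\pi$). For $T\subseteq F$, $p_{T,\mathcal{N}}=\Pr_\pi[C_\pi\cap T\neq\emptyset]$ and $q_{T,\mathcal{N}}=\Pr_\pi[C_\pi\subseteq T]$, with $\pi$ uniformly random over permutations of $F$. $\mathcal{M}|_S$ is the restriction of $\mathcal{M}$ to $S$. A set $S\subseteq E$ is globally optimal in $\mathcal{M}$ (with $n=|E|$) if $q_{S,\mathcal{M}}\ge 1-2^{-20}$ and $p_{T,\mathcal{M}|_S}\ge \frac{|T|}{2^{21}|S|\log n}$ for all $T\subseteq S$. *)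

theory Defs
  imports Complex_Main "HOL-Combinatorics.Multiset_Permutations"
begin

definition matroid :: "'a set \<Rightarrow> ('a set \<Rightarrow> bool) \<Rightarrow> bool" where
  "matroid E indep \<longleftrightarrow> finite E
     \<and> (\<forall>X. indep X \<longrightarrow> X \<subseteq> E)
     \<and> indep {}
     \<and> (\<forall>X Y. indep Y \<and> X \<subseteq> Y \<longrightarrow> indep X)
     \<and> (\<forall>X Y. indep X \<and> indep Y \<and> card X < card Y \<longrightarrow> (\<exists>y\<in>Y - X. indep (insert y X)))"

definition restrict_indep :: "('a set \<Rightarrow> bool) \<Rightarrow> 'a set \<Rightarrow> 'a set \<Rightarrow> bool" where
  "restrict_indep indep S = (\<lambda>X. X \<subseteq> S \<and> indep X)"

definition circuit :: "('a set \<Rightarrow> bool) \<Rightarrow> 'a set \<Rightarrow> bool" where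
  "circuit indep C \<longleftrightarrow> \<not> indep C \<and> (\<forall>D. D \<subset> C \<longrightarrow> indep D)"

definition first_circuit :: "('a set \<Rightarrow> bool) \<Rightarrow> 'a list \<Rightarrow> 'a set" where
  "first_circuit indep \<pi> =
     (let k = (LEAST k. \<not> indep (set (take k \<pi>)))
      in THE C. circuit indep C \<and> C \<subseteq> set (take k \<pi>))"

definition p_prob :: "'a set \<Rightarrow> ('a set \<Rightarrow> bool) \<Rightarrow> 'a set \<Rightarrow> real" where
  "p_prob F indep T =
     card {\<pi> \<in> permutations_of_set F. first_circuit indep \<pi> \<inter> T \<noteq> {}}
     / card (permutations_of_set F)"

definition q_prob :: "'a set \<Rightarrow> ('a set \<Rightarrow> bool) \<Rightarrow> 'a set \<Rightarrow> real" where
  "q_prob F indep T =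
     card {\<pi> \<in> permutations_of_set F. first_circuit indep \<pi> \<subseteq> T}
     / card (permutations_of_set F)"

definition globally_optimal :: "'a set \<Rightarrow> ('a set \<Rightarrow> bool) \<Rightarrow> 'a set \<Rightarrow> bool" where
  "globally_optimal E indep S \<longleftrightarrow>
     q_prob E indep S \<ge> 1 - 2 powi (-20)
     \<and> (\<forall>T \<subseteq> S. p_prob S (restrict_indep indep S) T
            \<ge> card T / (2^21 * card S * log 2 (card E)))"

definition prune_step :: "('a set \<Rightarrow> real) \<Rightarrow> nat \<Rightarrow> 'a set \<Rightarrow> 'a set \<Rightarrow> bool" where
  "prune_step qh n S S' \<longleftrightarrow>
     (\<exists>T. T \<noteq> {} \<and> T \<subseteq> S \<and> qh S - qh (S - T) \<le> card T / (2^20 * card S * log 2 n)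
          \<and> S' = S - T)"

definition prune_output :: "('a set \<Rightarrow> real) \<Rightarrow> nat \<Rightarrow> 'a set \<Rightarrow> 'a set \<Rightarrow> bool" where
  "prune_output qh n E S \<longleftrightarrow> (prune_step qh n)\<^sup>*\<^sup>* E S \<and> (\<nexists>S'. prune_step qh n S S')"

end

theory Submission
  imports Defs "HOL-Analysis.Harmonic_Numbers"
begin

lemma mat_parts: assumes "matroid E indep" shows mat_finite: "finite E" and mat_sub: "\<And>X. indep X \<Longrightarrow> X \<subseteq> E"
  and mat_empty: "indep {}" and mat_down: "\<And>X Y. indep Y \<Longrightarrow> X \<subseteq> Y \<Longrightarrow> indep X"
  and mat_aug: "\<And>X Y. indep X \<Longrightarrow> indep Y \<Longrightarrow> card X < card Y \<Longrightarrow> \<exists>y\<in>Y-X. indep (insert y X)"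
  using assms unfolding matroid_def by blast+

lemma mat_ifin: "matroid E indep \<Longrightarrow> indep X \<Longrightarrow> finite X"
  by (rule finite_subset[OF mat_sub mat_finite])

lemma circuit_nonempty: "matroid E indep \<Longrightarrow> circuit indep C \<Longrightarrow> C \<noteq> {}"
  using mat_empty unfolding circuit_def by metis

lemma circuit_exists:
  assumes M: "matroid E indep"
  shows "finite X \<Longrightarrow> \<not> indep X \<Longrightarrow> \<exists>C\<subseteq>X. circuit indep C"
proof (induction X rule: finite_psubset_induct)
  case (psubset X)
  show ?case
  proof (cases "\<forall>D. D \<subset> X \<longrightarrow> indep D")
    case True
    then have "circuit indep X" using psubset.prems unfolding circuit_def by simp
    then show ?thesis by auto
  next
    case False
    then obtain D where D: "D \<subset> X" "\<not> indep D" by auto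
    obtain C where "C \<subseteq> D" "circuit indep C" using psubset.IH[OF D] by auto
    then show ?thesis using D(1) by (meson order.trans psubset_imp_subset)
  qed
qed

lemma aug_to_size:
  assumes M: "matroid E indep" 
  shows "indep X \<Longrightarrow> indep I \<Longrightarrow> X \<subseteq> Y \<Longrightarrow> I \<subseteq> Y \<Longrightarrow> card X \<le> card I
     \<Longrightarrow> \<exists>B. X \<subseteq> B \<and> B \<subseteq> Y \<and> indep B \<and> card B = card I"
proof (induction "card I - card X" arbitrary: X)
  case 0
  then have "card X = card I" by simp
  then show ?case using 0 by auto
next
  case (Suc k)
  then have lt: "card X < card I" by linarith
  obtain y where y: "y \<in> I - X" "indep (insert y X)" using mat_aug[OF M Suc.prems(1,2) lt] by auto
  have fX: "finite X" using mat_ifin[OF M Suc.prems(1)] .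
  have c: "card (insert y X) = Suc (card X)" using y(1) fX by simp
  have yY: "insert y X \<subseteq> Y" using y(1) Suc.prems(3,4) by auto
  have k: "k = card I - card (insert y X)" using c Suc.hyps(2) by simp
  have le: "card (insert y X) \<le> card I" using c lt by simp
  obtain B where "insert y X \<subseteq> B \<and> B \<subseteq> Y \<and> indep B \<and> card B = card I"
    using Suc.hyps(1)[OF k y(2) Suc.prems(2) yY Suc.prems(4) le] by auto
  then show ?case by auto
qed

lemma unique_circuit:
  assumes M: "matroid E indep" and I: "indep I" and C1: "circuit indep C1" and C2: "circuit indep C2"
    and s1: "C1 \<subseteq> insert x I" and s2: "C2 \<subseteq> insert x I"
  shows "C1 = C2"
proof (rule ccontr)
  assume ne: "C1 \<noteq> C2"
  have fI: "finite I" using mat_ifin[OF M I] .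
  have d1: "\<not> indep C1" and d2: "\<not> indep C2" using C1 C2 unfolding circuit_def by auto
  have xI: "x \<notin> I"
  proof
    assume "x \<in> I"
    then have "C1 \<subseteq> I" using s1 by auto
    then show False using d1 mat_down[OF M I] by auto
  qed
  have x2: "x \<in> C2"
  proof (rule ccontr)
    assume "x \<notin> C2"
    then have "C2 \<subseteq> I" using s2 by auto
    then show False using d2 mat_down[OF M I] by auto
  qed
  have "\<not> C1 \<subseteq> C2"
  proof
    assume "C1 \<subseteq> C2"
    then have "C1 \<subset> C2" using ne by auto
    then have "indep C1" using C2 unfolding circuit_def by auto
    then show False using d1 by auto
  qed
  then obtain y where y: "y \<in> C1" "y \<notin> C2" by auto
  have yx: "y \<noteq> x" using y x2 by auto
  have yI: "y \<in> I" using y(1) yx s1 by auto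
  have "C1 - {y} \<subset> C1" using y(1) by auto
  then have i1: "indep (C1 - {y})" using C1 unfolding circuit_def by auto
  have sub1: "C1 - {y} \<subseteq> insert x I - {y}" using s1 by auto
  have cI: "card (insert x I - {y}) = card I" using fI xI yI by simp
  have "card (C1 - {y}) \<le> card I" using card_mono[OF _ sub1] fI cI by simp
  moreover have "C1 - {y} \<subseteq> insert x I" "I \<subseteq> insert x I" using s1 by auto
  ultimately obtain B where B: "C1 - {y} \<subseteq> B" "B \<subseteq> insert x I" "indep B" "card B = card I"
    using aug_to_size[OF M i1 I] by metis
  have "y \<notin> B"
  proof
    assume "y \<in> B"
    then have "C1 \<subseteq> B" using B(1) by auto
    then show False using mat_down[OF M B(3)] d1 by auto
  qed
  then have "B \<subseteq> insert x I - {y}" using B(2) by auto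
  moreover have "finite (insert x I - {y})" using fI by simp
  ultimately have "B = insert x I - {y}" using card_subset_eq B(4) cI by metis
  then have "C2 \<subseteq> B" using s2 y(2) by auto
  then show False using mat_down[OF M B(3)] d2 by auto
qed



lemma fc_char:
  assumes M: "matroid E indep" and m: "m < length xs" and I: "indep (set (take m xs))"
    and C: "circuit indep C" and CS: "C \<subseteq> set (take (Suc m) xs)"
  shows "first_circuit indep xs = C"
proof -
  have dC: "\<not> indep C" using C unfolding circuit_def by auto
  have dep: "\<not> indep (set (take (Suc m) xs))" using mat_down[OF M _ CS] dC by auto
  have L: "(LEAST k. \<not> indep (set (take k xs))) = Suc m"
  proof (rule Least_equality)
    show "\<not> indep (set (take (Suc m) xs))" by (rule dep)
  next
    fix y assume y: "\<not> indep (set (take y xs))"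
    show "Suc m \<le> y"
    proof (rule ccontr)
      assume "\<not> Suc m \<le> y"
      then have "y \<le> m" by simp
      then have "set (take y xs) \<subseteq> set (take m xs)" by (rule set_take_subset_set_take)
      then show False using mat_down[OF M I] y by auto
    qed
  qed
  have ins: "set (take (Suc m) xs) = insert (xs!m) (set (take m xs))"
    using m by (simp add: take_Suc_conv_app_nth)
  show ?thesis
    unfolding first_circuit_def Let_def L
  proof (rule the_equality)
    show "circuit indep C \<and> C \<subseteq> set (take (Suc m) xs)" using C CS by auto
  next
    fix C' assume "circuit indep C' \<and> C' \<subseteq> set (take (Suc m) xs)"
    then show "C' = C" using unique_circuit[OF M I, of C' C "xs!m"] C CS ins by auto
  qed
qed

lemma fc_exists:
  assumes M: "matroid E indep" and D: "\<not> indep (set xs)"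
  shows "\<exists>m C. m < length xs \<and> indep (set (take m xs)) \<and> circuit indep C
           \<and> C \<subseteq> set (take (Suc m) xs) \<and> xs ! m \<in> C"
proof -
  define k where "k = (LEAST k. \<not> indep (set (take k xs)))"
  have ex: "\<not> indep (set (take (length xs) xs))" using D by simp
  have kd: "\<not> indep (set (take k xs))" unfolding k_def by (rule LeastI[where P="\<lambda>k. \<not> indep (set (take k xs))", OF ex])
  have kle: "k \<le> length xs" unfolding k_def by (rule Least_le[where P="\<lambda>k. \<not> indep (set (take k xs))", OF ex])
  have k0: "k \<noteq> 0" using kd mat_empty[OF M] by (cases k) auto
  define m where "m = k - 1"
  have km: "k = Suc m" using k0 m_def by simp
  have mlt: "m < length xs" using kle km by simp
  have mi: "indep (set (take m xs))"
  proof (rule ccontr)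
    assume "\<not> indep (set (take m xs))"
    then have "k \<le> m" unfolding k_def by (rule Least_le[where P="\<lambda>k. \<not> indep (set (take k xs))"])
    then show False using km by simp
  qed
  obtain C where C: "C \<subseteq> set (take (Suc m) xs)" "circuit indep C"
    using circuit_exists[OF M _ kd[unfolded km]] by auto
  have ins: "set (take (Suc m) xs) = insert (xs!m) (set (take m xs))"
    using mlt by (simp add: take_Suc_conv_app_nth)
  have "xs ! m \<in> C"
  proof (rule ccontr)
    assume "xs ! m \<notin> C"
    then have "C \<subseteq> set (take m xs)" using C(1) ins by auto
    then have "indep C" using mat_down[OF M mi] by auto
    then show False using C(2) unfolding circuit_def by auto
  qed
  then show ?thesis using mlt mi C by blast
qed

lemma fc_circuit:
  assumes M: "matroid E indep" and D: "\<not> indep (set xs)"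
  shows "circuit indep (first_circuit indep xs) \<and> first_circuit indep xs \<subseteq> set xs"
proof -
  obtain m C where mc: "m < length xs" "indep (set (take m xs))" "circuit indep C"
           "C \<subseteq> set (take (Suc m) xs)" "xs ! m \<in> C"
    using fc_exists[OF M D] by blast
  have "first_circuit indep xs = C" by (rule fc_char[OF M mc(1-4)])
  moreover have "set (take (Suc m) xs) \<subseteq> set xs" by (rule set_take_subset)
  ultimately show ?thesis using mc by auto
qed

lemma circuit_restrict:
  assumes CS: "C \<subseteq> S"
  shows "circuit (restrict_indep indep S) C = circuit indep C"
proof
  assume a: "circuit (restrict_indep indep S) C"
  have "\<not> indep C" using a CS unfolding circuit_def restrict_indep_def by simp
  moreover have "indep D" if "D \<subset> C" for D
    using a that unfolding circuit_def restrict_indep_def by simp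
  ultimately show "circuit indep C" unfolding circuit_def by simp
next
  assume a: "circuit indep C"
  have "\<not> restrict_indep indep S C" using a unfolding circuit_def restrict_indep_def by simp
  moreover have "restrict_indep indep S D" if "D \<subset> C" for D
  proof -
    have "D \<subseteq> S" using that CS by (meson order.trans psubset_imp_subset)
    moreover have "indep D" using a that unfolding circuit_def by simp
    ultimately show ?thesis unfolding restrict_indep_def by simp
  qed
  ultimately show "circuit (restrict_indep indep S) C" unfolding circuit_def by simp
qed

lemma fc_restrict:
  assumes sS: "set xs \<subseteq> S"
  shows "first_circuit (restrict_indep indep S) xs = first_circuit indep xs"
proof -
  have tS: "set (take k xs) \<subseteq> S" for k using sS set_take_subset[of k xs] by (rule order_trans[rotated])
  have e1: "(\<lambda>k. \<not> restrict_indep indep S (set (take k xs))) = (\<lambda>k. \<not> indep (set (take k xs)))"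
  proof (rule ext)
    fix k show "(\<not> restrict_indep indep S (set (take k xs))) = (\<not> indep (set (take k xs)))"
      using tS[of k] unfolding restrict_indep_def by simp
  qed
  have e2: "(\<lambda>C. circuit (restrict_indep indep S) C \<and> C \<subseteq> set (take k xs))
          = (\<lambda>C. circuit indep C \<and> C \<subseteq> set (take k xs))" for k
  proof (rule ext)
    fix C
    show "(circuit (restrict_indep indep S) C \<and> C \<subseteq> set (take k xs))
          = (circuit indep C \<and> C \<subseteq> set (take k xs))"
    proof (cases "C \<subseteq> set (take k xs)")
      case True
      then have CS: "C \<subseteq> S" using tS[of k] by (rule order_trans)
      show ?thesis using circuit_restrict[OF CS] True by simp
    qed simp
  qed
  show ?thesis unfolding first_circuit_def Let_def e1 e2 ..
qed

lemma take_filter_prefix: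
  "take (length (filter P xs)) (filter P (xs @ ys)) = filter P xs"
  by simp

lemma fc_filter:
  assumes M: "matroid E indep" and D: "\<not> indep (set xs)" and CS: "first_circuit indep xs \<subseteq> S"
  shows "first_circuit indep (filter (\<lambda>x. x \<in> S) xs) = first_circuit indep xs"
proof -
  obtain m C where mc: "m < length xs" "indep (set (take m xs))" "circuit indep C"
           "C \<subseteq> set (take (Suc m) xs)" "xs ! m \<in> C"
    using fc_exists[OF M D] by blast
  have fc: "first_circuit indep xs = C" by (rule fc_char[OF M mc(1-4)])
  have xS: "xs ! m \<in> S" using mc(5) CS fc by auto
  define P where "P = (\<lambda>x. x \<in> S)"
  define pre where "pre = filter P (take m xs)"
  define ys where "ys = filter P xs"
  have xs_split: "xs = take m xs @ xs ! m # drop (Suc m) xs" using mc(1) by (rule id_take_nth_drop)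
  have ys_split: "ys = pre @ xs ! m # filter P (drop (Suc m) xs)"
    unfolding ys_def pre_def using xS P_def by (subst xs_split) simp
  have t1: "take (length pre) ys = pre" using ys_split by simp
  have t2: "take (Suc (length pre)) ys = pre @ [xs ! m]" using ys_split by simp
  have lt: "length pre < length ys" using ys_split by simp
  have i: "indep (set (take (length pre) ys))"
    using t1 mat_down[OF M mc(2)] unfolding pre_def by auto
  have ins: "set (take (Suc m) xs) = insert (xs!m) (set (take m xs))"
    using mc(1) by (simp add: take_Suc_conv_app_nth)
  have "C \<subseteq> set (pre @ [xs ! m])"
    unfolding pre_def P_def using mc(4) ins CS fc by auto
  then have "C \<subseteq> set (take (Suc (length pre)) ys)" using t2 by simp
  then have "first_circuit indep ys = C" by (rule fc_char[OF M lt i mc(3)])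
  then show ?thesis using fc unfolding ys_def P_def by simp
qed



definition fib :: "'a set \<Rightarrow> 'a set \<Rightarrow> 'a list \<Rightarrow> 'a list set" where
  "fib E S \<sigma> = {\<pi> \<in> permutations_of_set E. filter (\<lambda>x. x \<in> S) \<pi> = \<sigma>}"

lemma fiber_le:
  assumes SE: "S \<subseteq> E" and s1: "\<sigma> \<in> permutations_of_set S" and s2: "\<sigma>' \<in> permutations_of_set S"
  shows "card (fib E S \<sigma>) \<le> card (fib E S \<sigma>')"
proof -
  have d1: "distinct \<sigma>" "set \<sigma> = S" using s1 by (auto dest: permutations_of_setD)
  have d2: "distinct \<sigma>'" "set \<sigma>' = S" using s2 by (auto dest: permutations_of_setD)
  have len: "length \<sigma>' = length \<sigma>" using d1 d2 distinct_card by metis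
  have bij: "bij_betw ((!) \<sigma>) {..<length \<sigma>} S" using d1 by (intro bij_betw_nth) auto
  have inj: "inj_on ((!) \<sigma>) {..<length \<sigma>}" using bij by (rule bij_betw_imp_inj_on)
  have img: "(!) \<sigma> ` {..<length \<sigma>} = S" using bij by (rule bij_betw_imp_surj_on)
  define g where "g = the_inv_into {..<length \<sigma>} ((!) \<sigma>)"
  define f where "f y = (if y \<in> S then \<sigma>' ! g y else y)" for y
  have g1: "g (\<sigma> ! i) = i" if "i < length \<sigma>" for i
    unfolding g_def using the_inv_into_f_f[OF inj] that by simp
  have g2: "g y < length \<sigma>" "\<sigma> ! (g y) = y" if "y \<in> S" for y
  proof -
    have "y \<in> (!) \<sigma> ` {..<length \<sigma>}" using img that by simp
    then show "g y < length \<sigma>" unfolding g_def using the_inv_into_into[OF inj, of y "{..<length \<sigma>}"] by auto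
    show "\<sigma> ! (g y) = y" unfolding g_def using f_the_inv_into_f[OF inj] img that by simp
  qed
  have fs: "f (\<sigma> ! i) = \<sigma>' ! i" if "i < length \<sigma>" for i
  proof -
    have "\<sigma> ! i \<in> S" using d1 that nth_mem by metis
    then show ?thesis unfolding f_def using g1 that by simp
  qed
  have mapf: "map f \<sigma> = \<sigma>'"
    by (rule nth_equalityI) (simp_all add: len fs)
  have fS: "f y \<in> S" if "y \<in> S" for y
    unfolding f_def using that g2[OF that] len d2 nth_mem by (metis)
  have fN: "f y = y" if "y \<notin> S" for y unfolding f_def using that by simp
  have injf: "inj f"
  proof (rule injI)
    fix y z assume e: "f y = f z"
    show "y = z"
    proof (cases "y \<in> S"; cases "z \<in> S")
      assume yS: "y \<in> S" and zS: "z \<in> S"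
      have "\<sigma>' ! g y = \<sigma>' ! g z" using e yS zS unfolding f_def by simp
      then have "g y = g z" using nth_eq_iff_index_eq[OF d2(1)] g2(1)[OF yS] g2(1)[OF zS] len by metis
      then show ?thesis using g2(2)[OF yS] g2(2)[OF zS] by metis
    next
      assume yS: "y \<in> S" and zS: "z \<notin> S"
      then show ?thesis using e fS[OF yS] fN[OF zS] by simp
    next
      assume yS: "y \<notin> S" and zS: "z \<in> S"
      then show ?thesis using e fS[OF zS] fN[OF yS] by simp
    next
      assume yS: "y \<notin> S" and zS: "z \<notin> S"
      then show ?thesis using e fN by simp
    qed
  qed
  have PS: "(\<lambda>x. x \<in> S) \<circ> f = (\<lambda>x. x \<in> S)"
  proof (rule ext)
    fix x show "((\<lambda>x. x \<in> S) \<circ> f) x = (x \<in> S)" using fS fN by (cases "x \<in> S") auto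
  qed
  have fE: "f ` E = E"
  proof
    show "f ` E \<subseteq> E" using fS fN SE by (auto) (metis subsetD fN fS)
  next
    show "E \<subseteq> f ` E"
    proof
      fix y assume yE: "y \<in> E"
      show "y \<in> f ` E"
      proof (cases "y \<in> S")
        case True
        then have "y \<in> set (map f \<sigma>)" using mapf d2 by simp
        then obtain x where "x \<in> set \<sigma>" "y = f x" by auto
        then show ?thesis using d1 SE by auto
      next
        case False
        then show ?thesis using fN yE by (metis image_eqI)
      qed
    qed
  qed
  have maps: "map f ` fib E S \<sigma> \<subseteq> fib E S \<sigma>'"
  proof
    fix \<pi>' assume "\<pi>' \<in> map f ` fib E S \<sigma>"
    then obtain \<pi> where p: "\<pi> \<in> fib E S \<sigma>" "\<pi>' = map f \<pi>" by auto
    have pe: "set \<pi> = E" "distinct \<pi>" "filter (\<lambda>x. x \<in> S) \<pi> = \<sigma>"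
      using p(1) unfolding fib_def by (auto dest: permutations_of_setD)
    have "set \<pi>' = E" using p(2) pe fE by simp
    moreover have "distinct \<pi>'" using p(2) pe(2) injf by (simp add: distinct_map inj_on_subset[OF injf])
    moreover have "filter (\<lambda>x. x \<in> S) \<pi>' = \<sigma>'"
      using p(2) pe(3) mapf by (simp add: filter_map PS)
    ultimately show "\<pi>' \<in> fib E S \<sigma>'" unfolding fib_def by auto
  qed
  have "inj_on (map f) (fib E S \<sigma>)" using inj_mapI[OF injf] by (rule inj_on_subset) simp
  moreover have "finite (fib E S \<sigma>')" unfolding fib_def by simp
  ultimately show ?thesis using maps card_inj_on_le by blast
qed

lemma filter_perm:
  assumes SE: "S \<subseteq> E" and p: "\<pi> \<in> permutations_of_set E"
  shows "filter (\<lambda>x. x \<in> S) \<pi> \<in> permutations_of_set S"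
  using p SE by (auto simp: permutations_of_set_def)

lemma count_filter:
  assumes fE: "finite E" and SE: "S \<subseteq> E" and A: "A \<subseteq> permutations_of_set S"
  shows "real (card {\<pi> \<in> permutations_of_set E. filter (\<lambda>x. x \<in> S) \<pi> \<in> A}) / fact (card E)
        = real (card A) / fact (card S)"
proof -
  have fS: "finite S" using fE SE finite_subset by auto
  obtain \<sigma>0 where s0: "\<sigma>0 \<in> permutations_of_set S" using fS permutations_of_set_empty_iff by blast
  define c where "c = card (fib E S \<sigma>0)"
  have cc: "card (fib E S \<sigma>) = c" if "\<sigma> \<in> permutations_of_set S" for \<sigma>
    unfolding c_def using fiber_le[OF SE that s0] fiber_le[OF SE s0 that] by simp
  have U: "card {\<pi> \<in> permutations_of_set E. filter (\<lambda>x. x \<in> S) \<pi> \<in> B} = card B * c"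
    if B: "B \<subseteq> permutations_of_set S" for B
  proof -
    have eq: "{\<pi> \<in> permutations_of_set E. filter (\<lambda>x. x \<in> S) \<pi> \<in> B} = (\<Union>\<sigma>\<in>B. fib E S \<sigma>)"
      unfolding fib_def by auto
    have fB: "finite B" using B finite_subset by (metis finite_permutations_of_set)
    have "card (\<Union>\<sigma>\<in>B. fib E S \<sigma>) = (\<Sum>\<sigma>\<in>B. card (fib E S \<sigma>))"
      by (rule card_UN_disjoint) (auto simp: fB fib_def)
    also have "\<dots> = (\<Sum>\<sigma>\<in>B. c)" using cc B by (intro sum.cong) auto
    finally show ?thesis using eq by simp
  qed
  have all: "permutations_of_set E = {\<pi> \<in> permutations_of_set E. filter (\<lambda>x. x \<in> S) \<pi> \<in> permutations_of_set S}"
    using filter_perm[OF SE] by auto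
  have fe: "(fact (card E) :: nat) = fact (card S) * c"
    using U[of "permutations_of_set S"] all fE fS by (metis card_permutations_of_set order_refl)
  have cpos: "c > 0" using fe by (metis fact_nonzero mult_0_right neq0_conv)
  have fe': "(fact (card E) :: real) = fact (card S) * real c"
    using fe by (metis of_nat_fact of_nat_mult)
  show ?thesis using U[OF A] fe' cpos by (simp add: field_simps)
qed



lemma q_diff_le_p:
  assumes M: "matroid E indep" and D: "\<not> indep E" and SE: "S \<subseteq> E" and TS: "T \<subseteq> S"
  shows "q_prob E indep S - q_prob E indep (S - T) \<le> p_prob S (restrict_indep indep S) T"
proof -
  have fE: "finite E" by (rule mat_finite[OF M])
  have fS: "finite S" using fE SE finite_subset by auto
  define P where "P = permutations_of_set E"
  define A1 where "A1 = {\<pi> \<in> P. first_circuit indep \<pi> \<subseteq> S}"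
  define A2 where "A2 = {\<pi> \<in> P. first_circuit indep \<pi> \<subseteq> S - T}"
  define A3 where "A3 = {\<pi> \<in> P. first_circuit indep \<pi> \<subseteq> S \<and> first_circuit indep \<pi> \<inter> T \<noteq> {}}"
  define A where "A = {\<sigma> \<in> permutations_of_set S. first_circuit (restrict_indep indep S) \<sigma> \<inter> T \<noteq> {}}"
  have fP: "finite P" unfolding P_def by simp
  have un: "A1 = A2 \<union> A3" unfolding A1_def A2_def A3_def by auto
  have dj: "A2 \<inter> A3 = {}" unfolding A2_def A3_def by auto
  have c1: "card A1 = card A2 + card A3"
    unfolding un by (rule card_Un_disjoint) (use fP dj in \<open>auto simp: A2_def A3_def\<close>)
  have sub: "A3 \<subseteq> {\<pi> \<in> P. filter (\<lambda>x. x \<in> S) \<pi> \<in> A}"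
  proof
    fix \<pi> assume p: "\<pi> \<in> A3"
    have pP: "\<pi> \<in> P" and cs: "first_circuit indep \<pi> \<subseteq> S" and ct: "first_circuit indep \<pi> \<inter> T \<noteq> {}"
      using p unfolding A3_def by auto
    have sp: "set \<pi> = E" using pP unfolding P_def by (auto dest: permutations_of_setD)
    have Dp: "\<not> indep (set \<pi>)" using sp D by simp
    have e1: "first_circuit indep (filter (\<lambda>x. x \<in> S) \<pi>) = first_circuit indep \<pi>"
      by (rule fc_filter[OF M Dp cs])
    have e2: "first_circuit (restrict_indep indep S) (filter (\<lambda>x. x \<in> S) \<pi>)
            = first_circuit indep (filter (\<lambda>x. x \<in> S) \<pi>)"
      by (rule fc_restrict) auto
    have "filter (\<lambda>x. x \<in> S) \<pi> \<in> permutations_of_set S"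
      using filter_perm[OF SE] pP unfolding P_def by auto
    then show "\<pi> \<in> {\<pi> \<in> P. filter (\<lambda>x. x \<in> S) \<pi> \<in> A}"
      using pP ct e1 e2 unfolding A_def by auto
  qed
  have c3: "card A3 \<le> card {\<pi> \<in> P. filter (\<lambda>x. x \<in> S) \<pi> \<in> A}"
    by (rule card_mono[OF _ sub]) (simp add: fP)
  have cnt: "real (card {\<pi> \<in> P. filter (\<lambda>x. x \<in> S) \<pi> \<in> A}) / fact (card E)
        = real (card A) / fact (card S)"
    unfolding P_def by (rule count_filter[OF fE SE]) (auto simp: A_def)
  have qS: "q_prob E indep S = real (card A1) / fact (card E)"
    unfolding q_prob_def A1_def P_def using fE by simp
  have qST: "q_prob E indep (S - T) = real (card A2) / fact (card E)"
    unfolding q_prob_def A2_def P_def using fE by simp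
  have pp: "p_prob S (restrict_indep indep S) T = real (card A) / fact (card S)"
    unfolding p_prob_def A_def using fS by simp
  have "q_prob E indep S - q_prob E indep (S - T) = real (card A3) / fact (card E)"
    unfolding qS qST c1 by (simp add: diff_divide_distrib[symmetric])
  also have "\<dots> \<le> real (card {\<pi> \<in> P. filter (\<lambda>x. x \<in> S) \<pi> \<in> A}) / fact (card E)"
    using c3 by (simp add: divide_right_mono)
  finally show ?thesis using cnt pp by simp
qed

lemma q_E:
  assumes M: "matroid E indep" and D: "\<not> indep E"
  shows "q_prob E indep E = 1"
proof -
  have fE: "finite E" by (rule mat_finite[OF M])
  have "{\<pi> \<in> permutations_of_set E. first_circuit indep \<pi> \<subseteq> E} = permutations_of_set E"
  proof -
    have "first_circuit indep \<pi> \<subseteq> E" if "\<pi> \<in> permutations_of_set E" for \<pi>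
    proof -
      have sp: "set \<pi> = E" using that by (auto dest: permutations_of_setD)
      then show ?thesis using fc_circuit[OF M] D by metis
    qed
    then show ?thesis by auto
  qed
  then show ?thesis unfolding q_prob_def using fE by simp
qed

lemma q_nonempty:
  assumes M: "matroid E indep" and D: "\<not> indep E" and pos: "q_prob E indep S > 0"
  shows "S \<noteq> {}"
proof
  assume S: "S = {}"
  have "{\<pi> \<in> permutations_of_set E. first_circuit indep \<pi> \<subseteq> S} = {}"
  proof -
    have "\<not> first_circuit indep \<pi> \<subseteq> {}" if "\<pi> \<in> permutations_of_set E" for \<pi>
    proof -
      have sp: "set \<pi> = E" using that by (auto dest: permutations_of_setD)
      then have "circuit indep (first_circuit indep \<pi>)" using fc_circuit[OF M] D by metis
      then show ?thesis using circuit_nonempty[OF M] by auto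
    qed
    then show ?thesis using S by auto
  qed
  then have "q_prob E indep S = 0" unfolding q_prob_def by simp
  then show False using pos by simp
qed




lemma num_facts:
  fixes n :: nat
  assumes n: "n \<ge> 2^48"
  shows "1 + ln (real n) \<le> 3/4 * log 2 (real n)" and "2^22 * log 2 (real n) \<le> real n"
    and "log 2 (real n) > 0" and "2 / real n \<le> 1/4 / 2^20"
proof -
  have l1: "2/3 \<le> ln (2::real)" by (rule ln2_ge_two_thirds)
  have l2: "ln (2::real) \<le> 25/36" by (rule ln2_le_25_over_36)
  have nr: "real n \<ge> 2^48" using n by (metis of_nat_le_iff of_nat_numeral of_nat_power)
  have npos: "real n > 0" using nr by simp
  have "ln (real n) \<ge> ln (2^48)" using nr by (subst ln_le_cancel_iff) auto
  moreover have "ln ((2::real)^48) = 48 * ln 2" using ln_realpow[of "2::real" 48] by simp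
  ultimately have lnn: "ln (real n) \<ge> 32" using l1 by linarith
  have L: "log 2 (real n) = ln (real n) / ln 2" by (simp add: log_def)
  have lpos: "ln (2::real) > 0" using l1 by linarith
  have a: "ln (real n) * ln 2 \<le> ln (real n) * (25/36)" using mult_left_mono[OF l2, of "ln (real n)"] lnn by simp
  have b: "ln (real n) * (36/25) \<le> ln (real n) / ln 2"
    using a lpos by (simp add: le_divide_eq)
  show "1 + ln (real n) \<le> 3/4 * log 2 (real n)" using b lnn unfolding L by linarith
  show "log 2 (real n) > 0" using lnn lpos unfolding L by simp
  have c: "ln (real n) * (2/3) \<le> ln (real n) * ln 2" using mult_left_mono[OF l1, of "ln (real n)"] lnn by simp
  have d: "ln (real n) / ln 2 \<le> 3/2 * ln (real n)"
    using c lpos by (simp add: divide_le_eq)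
  have sq: "sqrt (real n) \<ge> 2^24"
  proof -
    have "sqrt ((2::real)^48) = 2^24"
      by (rule real_sqrt_unique) simp_all
    then show ?thesis using real_sqrt_le_mono[OF nr] by simp
  qed
  have e: "ln (real n) \<le> 2 * sqrt (real n)"
  proof -
    have "ln (sqrt (real n)) \<le> sqrt (real n) - 1" using npos by (intro ln_le_minus_one) simp
    then show ?thesis using ln_sqrt[of "real n"] npos by simp
  qed
  have f: "sqrt (real n) * sqrt (real n) = real n" using npos by simp
  have g: "2^24 * sqrt (real n) \<le> sqrt (real n) * sqrt (real n)"
    using mult_right_mono[OF sq, of "sqrt (real n)"] by simp
  have h1: "ln (real n) / ln 2 \<le> 3 * sqrt (real n)" using d e by linarith
  have h2: "(2::real)^22 * (ln (real n) / ln 2) \<le> 2^22 * (3 * sqrt (real n))" by (rule mult_left_mono[OF h1]) simp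
  have h3: "(2::real)^22 * (3 * sqrt (real n)) = 12582912 * sqrt (real n)" by simp
  have h4: "(2::real)^24 * sqrt (real n) = 16777216 * sqrt (real n)" by simp
  have h5: "sqrt (real n) \<ge> 0" by simp
  show "2^22 * log 2 (real n) \<le> real n" using h2 h3 h4 h5 f g unfolding L by linarith
  show "2 / real n \<le> 1/4 / 2^20" using nr by (simp add: divide_le_eq)
qed



definition phi :: "nat \<Rightarrow> real" where
  "phi s = (if s = 0 then 0 else 1 + ln (real s))"

lemma phi_nonneg: "phi s \<ge> 0"
  unfolding phi_def by auto

lemma phi_step:
  assumes t: "1 \<le> t" "t \<le> s"
  shows "real t / real s \<le> phi s - phi (s - t)"
proof (cases "s - t = 0")
  case True
  have s0: "s \<noteq> 0" using t by simp
  have "real t / real s \<le> 1" using t by simp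
  moreover have "ln (real s) \<ge> 0" using s0 by simp
  ultimately show ?thesis using True s0 unfolding phi_def by simp
next
  case False
  have s0: "s \<noteq> 0" using t by simp
  have sp: "real s > 0" using s0 by simp
  have rp: "real (s - t) > 0" using False by simp
  have r: "real (s - t) = real s - real t" using t by (simp add: of_nat_diff)
  have "ln (real (s - t) / real s) \<le> real (s - t) / real s - 1"
    using rp sp by (intro ln_le_minus_one) simp
  moreover have "ln (real (s - t) / real s) = ln (real (s - t)) - ln (real s)"
    using rp sp by (simp add: ln_div)
  moreover have "real (s - t) / real s - 1 = - (real t / real s)"
    using sp r by (simp add: field_simps)
  ultimately show ?thesis using False s0 unfolding phi_def by simp
qed

lemma invariant:
  assumes M: "matroid E indep" and D: "\<not> indep E"
    and n2: "log 2 (real (card E)) > 0"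
    and err: "\<forall>T \<subseteq> E. \<bar>qh T - q_prob E indep T\<bar> \<le> 1 / (real (card E))^2"
    and R: "(prune_step qh (card E))\<^sup>*\<^sup>* E S"
  shows "S \<subseteq> E \<and> q_prob E indep S \<ge> 1 - (phi (card E) - phi (card S)) / (2^20 * log 2 (card E))
            - 2 * real (card E - card S) / (real (card E))^2"
  using R
proof (induction rule: rtranclp_induct)
  case base
  then show ?case using q_E[OF M D] by simp
next
  case (step S S')
  define n where "n = card E"
  define K where "K = (2::real)^20 * log 2 (real n)"
  have Kp: "K > 0" unfolding K_def n_def using n2 by simp
  have SE: "S \<subseteq> E" and IH: "q_prob E indep S \<ge> 1 - (phi n - phi (card S)) / K
            - 2 * real (n - card S) / (real n)^2" using step.IH unfolding n_def K_def by auto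
  obtain T where T: "T \<noteq> {}" "T \<subseteq> S" "qh S - qh (S - T) \<le> card T / (2^20 * card S * log 2 n)"
      "S' = S - T" using step.hyps(2) unfolding prune_step_def n_def by blast
  have fE: "finite E" by (rule mat_finite[OF M])
  have fS: "finite S" using fE SE finite_subset by auto
  have fT: "finite T" using fS T(2) finite_subset by auto
  define s where "s = card S"
  define t where "t = card T"
  have t1: "1 \<le> t" unfolding t_def using T(1) fT by (simp add: Suc_le_eq card_gt_0_iff)
  have ts: "t \<le> s" unfolding t_def s_def using card_mono[OF fS T(2)] .
  have sn: "s \<le> n" unfolding s_def n_def using card_mono[OF fE SE] .
  have cST: "card (S - T) = s - t" unfolding s_def t_def using card_Diff_subset[OF fT T(2)] .
  have STE: "S - T \<subseteq> E" using SE by auto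
  have e1: "\<bar>qh S - q_prob E indep S\<bar> \<le> 1 / (real n)^2" using err SE unfolding n_def by auto
  have e2: "\<bar>qh (S - T) - q_prob E indep (S - T)\<bar> \<le> 1 / (real n)^2" using err STE unfolding n_def by auto
  have sp: "real s > 0" using t1 ts by simp
  have fr: "real t / (real (2^20 * s) * log 2 (real n)) = (real t / real s) / K"
    unfolding K_def by (simp add: field_simps)
  have ph: "(real t / real s) / K \<le> (phi s - phi (s - t)) / K"
    using divide_right_mono[OF phi_step[OF t1 ts], of K] Kp by simp
  have step1: "q_prob E indep (S - T) \<ge> q_prob E indep S - 2 / (real n)^2 - (phi s - phi (s - t)) / K"
  proof -
    have T3: "qh S - qh (S - T) \<le> real t / (real (2^20 * s) * log 2 (real n))" using T(3) unfolding t_def s_def n_def .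
    have a1: "- (qh S - q_prob E indep S) \<le> 1 / (real n)^2" using abs_le_D2[OF e1] .
    have a2: "qh (S - T) - q_prob E indep (S - T) \<le> 1 / (real n)^2" using abs_le_D1[OF e2] .
    have two: "2 / (real n)^2 = 1 / (real n)^2 + 1 / (real n)^2" by (simp add: add_divide_distrib[symmetric])
    show ?thesis using T3 a1 a2 two fr ph by linarith
  qed
  have split: "(phi n - phi s) / K + (phi s - phi (s - t)) / K = (phi n - phi (s - t)) / K"
    by (simp add: diff_divide_distrib)
  have rr: "real (n - (s - t)) = real (n - s) + real t" using ts sn by (simp add: of_nat_diff)
  have ee: "2 * real (n - s) / (real n)^2 + 2 / (real n)^2 \<le> 2 * real (n - (s - t)) / (real n)^2"
    using rr t1 by (simp add: divide_right_mono add_divide_distrib[symmetric])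
  have "q_prob E indep (S - T) \<ge> 1 - (phi n - phi (s - t)) / K - 2 * real (n - (s - t)) / (real n)^2"
    using step1 IH split ee unfolding s_def[symmetric] by linarith
  then show ?case using STE T(4) cST unfolding K_def n_def by simp
qed



theorem mainTheorem6:
  "\<exists>N::nat. \<forall>(E::'a set) indep (qh::'a set \<Rightarrow> real) S.
     matroid E indep \<longrightarrow> \<not> indep E \<longrightarrow> card E \<ge> N \<longrightarrow>
     (\<forall>T \<subseteq> E. \<bar>qh T - q_prob E indep T\<bar> \<le> 1 / (real (card E))^2) \<longrightarrow>
     prune_output qh (card E) E S \<longrightarrow>
     S \<noteq> {} \<and> globally_optimal E indep S"
proof (intro exI[of _ "2^48"] allI impI)
  fix E :: "'a set" and indep and qh :: "'a set \<Rightarrow> real" and S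
  assume M: "matroid E indep" and D: "\<not> indep E" and N: "card E \<ge> 2^48"
    and err: "\<forall>T \<subseteq> E. \<bar>qh T - q_prob E indep T\<bar> \<le> 1 / (real (card E))^2"
    and out: "prune_output qh (card E) E S"
  define n where "n = card E"
  define L where "L = log 2 (real n)"
  have nf1: "1 + ln (real n) \<le> 3/4 * L" and nf2: "2^22 * L \<le> real n"
    and Lp: "L > 0" and nf4: "2 / real n \<le> 1/4 / 2^20"
    using num_facts[OF N] unfolding n_def L_def by auto
  have n0: "n \<noteq> 0" using N unfolding n_def by auto
  have npos: "real n > 0" using n0 by simp
  have R: "(prune_step qh (card E))\<^sup>*\<^sup>* E S" and nterm: "\<nexists>S'. prune_step qh (card E) S S'"
    using out unfolding prune_output_def by auto
  have inv: "S \<subseteq> E \<and> q_prob E indep S \<ge> 1 - (phi (card E) - phi (card S)) / (2^20 * log 2 (card E))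
            - 2 * real (card E - card S) / (real (card E))^2"
    by (rule invariant[OF M D _ err R]) (use Lp in \<open>simp add: L_def n_def\<close>)
  have SE: "S \<subseteq> E" using inv by simp
  have fE: "finite E" by (rule mat_finite[OF M])
  have fS: "finite S" using fE SE finite_subset by auto
  define s where "s = card S"
  have sn: "s \<le> n" unfolding s_def n_def using card_mono[OF fE SE] .
  have qb: "q_prob E indep S \<ge> 1 - (phi n - phi s) / (2^20 * L) - 2 * real (n - s) / (real n)^2"
    using inv unfolding n_def s_def L_def by simp
  have phin: "phi n = 1 + ln (real n)" using n0 unfolding phi_def by simp
  have a1: "(phi n - phi s) / (2^20 * L) \<le> (3/4 * L) / (2^20 * L)"
    using phi_nonneg[of s] phin nf1 Lp by (intro divide_right_mono) auto
  have a2: "(3/4 * L) / (2^20 * L) = 3/4 / 2^20" using Lp by simp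
  have a3: "2 * real (n - s) / (real n)^2 \<le> 2 / real n"
  proof -
    have "2 * real (n - s) \<le> 2 * real n" using sn by simp
    then have "2 * real (n - s) / (real n)^2 \<le> 2 * real n / (real n)^2"
      by (rule divide_right_mono) simp
    also have "\<dots> = 2 / real n" using npos by (simp add: power2_eq_square)
    finally show ?thesis .
  qed
  have c1: "(3/4 / 2^20::real) = 3/4194304" and c2: "(1/4 / 2^20::real) = 1/4194304"
    and c3: "(1 / 2^20::real) = 4/4194304" by simp_all
  have qS: "q_prob E indep S \<ge> 1 - 1 / 2^20" using qb a1 a2 a3 nf4 unfolding c1 c2 c3 by linarith
  have Sne: "S \<noteq> {}" using q_nonempty[OF M D] qS by simp
  have part2: "p_prob S (restrict_indep indep S) T \<ge> card T / (2^21 * card S * log 2 (card E))"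
    if TS: "T \<subseteq> S" for T
  proof (cases "T = {}")
    case True
    then show ?thesis unfolding p_prob_def by simp
  next
    case False
    have fT: "finite T" using fS TS finite_subset by auto
    define t where "t = card T"
    have t1: "1 \<le> t" unfolding t_def using False fT by (simp add: Suc_le_eq card_gt_0_iff)
    have ts: "t \<le> s" unfolding t_def s_def using card_mono[OF fS TS] .
    have sp: "real s > 0" using t1 ts by simp
    have np: "\<not> (qh S - qh (S - T) \<le> card T / (2^20 * card S * log 2 (card E)))"
      using nterm False TS unfolding prune_step_def by blast
    then have np': "qh S - qh (S - T) > real t / (real (2^20 * s) * L)"
      unfolding t_def s_def L_def n_def by simp
    have key: "q_prob E indep S - q_prob E indep (S - T) \<le> p_prob S (restrict_indep indep S) T"
      by (rule q_diff_le_p[OF M D SE TS])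
    have STE: "S - T \<subseteq> E" using SE by auto
    have e1: "\<bar>qh S - q_prob E indep S\<bar> \<le> 1 / (real n)^2" using err SE unfolding n_def by auto
    have e2: "\<bar>qh (S - T) - q_prob E indep (S - T)\<bar> \<le> 1 / (real n)^2" using err STE unfolding n_def by auto
    have b1: "qh S - q_prob E indep S \<le> 1 / (real n)^2" using abs_le_D1[OF e1] .
    have b2: "- (qh (S - T) - q_prob E indep (S - T)) \<le> 1 / (real n)^2" using abs_le_D2[OF e2] .
    define x where "x = real t / (real (2^21 * s) * L)"
    have x2: "real t / (real (2^20 * s) * L) = 2 * x" unfolding x_def using sp Lp by (simp add: field_simps)
    have x1: "x \<ge> 1 / (2^21 * real n * L)"
    proof -
      have "1 / (2^21 * real n * L) \<le> 1 / (2^21 * real s * L)"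
        using sp sn Lp by (intro divide_left_mono mult_right_mono mult_left_mono) auto
      also have "\<dots> \<le> real t / (2^21 * real s * L)"
        using t1 sp Lp by (intro divide_right_mono) auto
      finally show ?thesis unfolding x_def by simp
    qed
    have x3: "2 / (real n)^2 \<le> 1 / (2^21 * real n * L)"
    proof -
      have "real n * (2^22 * L) \<le> real n * real n" using nf2 npos by (intro mult_left_mono) auto
      then show ?thesis using npos Lp by (simp add: field_simps power2_eq_square)
    qed
    have two: "2 / (real n)^2 = 1 / (real n)^2 + 1 / (real n)^2" by (simp add: add_divide_distrib[symmetric])
    have "p_prob S (restrict_indep indep S) T \<ge> x"
      using key np' x2 b1 b2 x1 x3 two by linarith
    then show ?thesis unfolding x_def t_def s_def L_def n_def by simp
  qed
  have "globally_optimal E indep S"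
    unfolding globally_optimal_def using qS part2 by (simp add: power_int_minus)
  then show "S \<noteq> {} \<and> globally_optimal E indep S" using Sne by simp
qed

end
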